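(* Let $0\le\alpha\le\beta$ and let $q=(q_n)$, $q_n\in(0,1)$, satisfy $st-\lim_n q_n=1$, $st-\lim_n q_n^n=a$ $(a<1)$ and $st-\lim_n 1/[n]_{q_n}=0$. Then for every bounded continuous function $f$ on $[0,\infty)$, $$st-\lim_{n\to\infty}\ \big\|\mathfrak{D}_n^{(\alpha,\beta)}(f;q_n;\cdot)-f\big\|_{\rho_0}=0,$$ where $\|g\|_{\rho_0}=\sup_{x\in[0,\infty)}\frac{|g(x)|}{1+x^2}$.
   Context: $q$-calculus notation, for $0<q<1$: $[n]_q=\frac{1-q^n}{1-q}$; $[k]_q!=[k]_q[k-1]_q\cdots[1]_q$ with $[0]_q!=1$; $\left[\begin{array}{c}n\\k\end{array}\right]_q=\frac{[n]_q!}{[k]_q!\,[n-k]_q!}$; $(1+x)_q^m=(1+x)(1+qx)\cdots(1+q^{m-1}x)$ with $(1+x)_q^0=1$. The $q$-exponential is $E_q(z)=\sum_{k=0}^\infty q^{k(k-1)/2}\frac{z^k}{[k]_q!}=\prod_{j=0}^\infty(1+(1-q)q^jz)$. The $q$-Jackson integral is $\int_0^a g(t)\,d_qt=(1-q)a\sum_{j=0}^\infty g(aq^j)q^j$. For $n\in\mathbb N$, $0<q<1$, $x\in[0,\infty)$ define $p^q_{n,k}(x)=\left[\begin{array}{c}n+k-1\\k\end{array}\right]_q q^{k(k-1)/2}\frac{x^k}{(1+x)_q^{n+k}}$ and $s^q_{n,k}(t)=E_q(-[n]_qt)\frac{([n]_qt)^k}{[k]_q!}$. The $q$-Baskakov–Szász–Stancu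 operators with parameters $0\le\alpha\le\beta$ are $$\mathfrak{D}_n^{(\alpha,\beta)}(f;q;x)=[n]_q\sum_{k=0}^\infty p^q_{n,k}(x)\int_0^{q/(1-q^n)} q^{-k-1}s^q_{n,k}(t)\, f\!\left(\frac{[n]_q t q^{-k}+\alpha}{[n]_q+\beta}\right)d_qt .$$ With $q=q_n$, $[n]_q$ means $[n]_{q_n}$. Statistical convergence: for $K\subseteq\mathbb N$, its natural density is $\delta(K)=\lim_n \frac1n|\{j\le n: j\in K\}|$ (if it exists). A real sequence $(x_j)$ is statistically convergent to $L$, written $st-\lim_n x_n=L$, if for every $\epsilon>0$, $\delta(\{j:|x_j-L|\ge\epsilon\})=0$. *)

theory Defs
  imports "HOL-Analysis.Analysis"
begin

definition qint :: "real \<Rightarrow> nat \<Rightarrow> real" where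
  "qint q n = (1 - q ^ n) / (1 - q)"

definition qfact :: "real \<Rightarrow> nat \<Rightarrow> real" where
  "qfact q k = (\<Prod>i\<in>{1..k}. qint q i)"

definition qbinom :: "real \<Rightarrow> nat \<Rightarrow> nat \<Rightarrow> real" where
  "qbinom q n k = qfact q n / (qfact q k * qfact q (n - k))"

definition qpoch :: "real \<Rightarrow> real \<Rightarrow> nat \<Rightarrow> real" where
  "qpoch q x m = (\<Prod>i<m. 1 + q ^ i * x)"

definition qexp :: "real \<Rightarrow> real \<Rightarrow> real" where
  "qexp q z = (\<Sum>k. q ^ (k * (k - 1) div 2) * z ^ k / qfact q k)"

definition qjackson :: "real \<Rightarrow> real \<Rightarrow> (real \<Rightarrow> real) \<Rightarrow> real" where
  "qjackson q a g = (1 - q) * a * (\<Sum>j. g (a * q ^ j) * q ^ j)"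

definition pqBS :: "real \<Rightarrow> nat \<Rightarrow> nat \<Rightarrow> real \<Rightarrow> real" where
  "pqBS q n k x = qbinom q (n + k - 1) k * q ^ (k * (k - 1) div 2) * x ^ k / qpoch q x (n + k)"

definition sqBS :: "real \<Rightarrow> nat \<Rightarrow> nat \<Rightarrow> real \<Rightarrow> real" where
  "sqBS q n k t = qexp q (- qint q n * t) * (qint q n * t) ^ k / qfact q k"

definition BSS_op :: "real \<Rightarrow> real \<Rightarrow> nat \<Rightarrow> real \<Rightarrow> (real \<Rightarrow> real) \<Rightarrow> real \<Rightarrow> real" where
  "BSS_op \<alpha> \<beta> n q f x = qint q n * (\<Sum>k. pqBS q n k x *
      qjackson q (q / (1 - q ^ n))
        (\<lambda>t. (1 / q ^ (k + 1)) * sqBS q n k t *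
              f ((qint q n * t / q ^ k + \<alpha>) / (qint q n + \<beta>))))"

definition st_lim :: "(nat \<Rightarrow> real) \<Rightarrow> real \<Rightarrow> bool" where
  "st_lim x L \<longleftrightarrow> (\<forall>\<epsilon>>0. (\<lambda>n. real (card {j \<in> {1..n}. \<bar>x j - L\<bar> \<ge> \<epsilon>}) / real n)
      \<longlonglongrightarrow> 0)"

definition rho0_norm :: "(real \<Rightarrow> real) \<Rightarrow> real" where
  "rho0_norm g = (SUP x\<in>{0..}. \<bar>g x\<bar> / (1 + x\<^sup>2))"

end

theory Submission
  imports Defs
begin

definition ee :: "real \<Rightarrow> nat \<Rightarrow> real" where
  "ee q j = qexp q (-(q ^ j / (1 - q)))"

definition HH :: "real \<Rightarrow> nat \<Rightarrow> real" where
  "HH q m = (\<Sum>j. q ^ (j * m) * ee q (Suc j))"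

lemma abs_sums_le:
  fixes a b :: "nat \<Rightarrow> real"
  assumes "\<And>i. \<bar>a i\<bar> \<le> b i" "a sums S" "b sums T"
  shows "\<bar>S\<bar> \<le> T"
proof -
  have l1: "a i \<le> b i" for i using assms(1)[of i] by (rule abs_le_D1)
  have l2: "- a i \<le> b i" for i using assms(1)[of i] by (rule abs_le_D2)
  have "S \<le> T" using l1 assms(2,3) by (rule sums_le)
  moreover have "-S \<le> T" using l2 sums_minus[OF assms(2)] assms(3) by (rule sums_le)
  ultimately show ?thesis by simp
qed

lemma tri_Suc: "Suc k * (Suc k - 1) div 2 = k * (k - 1) div 2 + k"
proof -
  have "Suc k * (Suc k - 1) = k * (k - 1) + 2 * k" by (cases k) (auto simp: algebra_simps)
  then show ?thesis by simp
qed

context fixes q :: real assumes q0: "0 < q" and q1: "q < 1"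
begin

lemma qint_Suc: "qint q (Suc n) = qint q n + q ^ n"
  using q1 by (simp add: qint_def field_simps)

lemma qint_0[simp]: "qint q 0 = 0" by (simp add: qint_def)

lemma qint_ge1: "1 \<le> n \<Longrightarrow> 1 \<le> qint q n"
proof -
  assume "1 \<le> n"
  then have "q ^ n \<le> q ^ 1" using q0 q1 by (intro power_decreasing) auto
  then show ?thesis using q1 by (simp add: qint_def field_simps)
qed

lemma qint_nonneg: "0 \<le> qint q n"
  using q0 q1 by (simp add: qint_def power_le_one)

lemma qfact_Suc: "qfact q (Suc k) = qfact q k * qint q (Suc k)"
  unfolding qfact_def by (simp add: prod.atLeast1_atMost_eq)

lemma qfact_0[simp]: "qfact q 0 = 1" by (simp add: qfact_def)

lemma qfact_ge1: "1 \<le> qfact q k"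
proof (induction k)
  case 0 then show ?case by simp
next
  case (Suc k)
  have "1 \<le> qint q (Suc k)" by (rule qint_ge1) simp
  have "1 * 1 \<le> qfact q k * qint q (Suc k)"
    using Suc \<open>1 \<le> qint q (Suc k)\<close> by (intro mult_mono) auto
  then show ?case by (simp add: qfact_Suc)
qed

lemma qfact_pos: "0 < qfact q k" using qfact_ge1[of k] by simp

lemma qexp_summable: "summable (\<lambda>k. q ^ (k * (k - 1) div 2) * z ^ k / qfact q k)"
proof -
  define g where "g k = q ^ (k * (k - 1) div 2) * \<bar>z\<bar> ^ k" for k
  have "(\<lambda>N. q ^ N * \<bar>z\<bar>) \<longlonglongrightarrow> 0 * \<bar>z\<bar>"
    using q0 q1 by (intro tendsto_mult LIMSEQ_power_zero tendsto_const) auto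
  then obtain N where N: "\<And>n. n \<ge> N \<Longrightarrow> \<bar>q ^ n * \<bar>z\<bar> - 0\<bar> < 1/2"
    unfolding LIMSEQ_def dist_real_def by (metis mult_zero_left half_gt_zero zero_less_one)
  have "summable g"
  proof (rule summable_ratio_test[of "1/2" N])
    fix n assume "n \<ge> N"
    have gS: "g (Suc n) = (q ^ n * \<bar>z\<bar>) * g n"
      unfolding g_def tri_Suc by (simp add: power_add)
    have gn: "0 \<le> g n" using q0 by (simp add: g_def)
    have "q ^ n * \<bar>z\<bar> \<le> 1/2" using N[OF \<open>n \<ge> N\<close>] by simp
    then have "(q ^ n * \<bar>z\<bar>) * g n \<le> 1/2 * g n" using gn by (rule mult_right_mono)
    moreover have "0 \<le> (q ^ n * \<bar>z\<bar>) * g n" using gn q0 by simp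
    ultimately show "norm (g (Suc n)) \<le> 1/2 * norm (g n)"
      using gn gS by simp
  qed simp
  then show ?thesis
  proof (rule summable_comparison_test[rotated])
    show "\<exists>N. \<forall>n\<ge>N. norm (q ^ (n * (n - 1) div 2) * z ^ n / qfact q n) \<le> g n"
    proof (intro exI allI impI)
      fix n
      have "norm (q ^ (n * (n - 1) div 2) * z ^ n / qfact q n) = g n / qfact q n"
        using q0 qfact_pos[of n] by (simp add: g_def abs_mult power_abs)
      also have "\<dots> \<le> g n / 1" using qfact_ge1[of n] q0
        by (intro divide_left_mono) (auto simp: g_def)
      finally show "norm (q ^ (n * (n - 1) div 2) * z ^ n / qfact q n) \<le> g n" by simp
    qed
  qed
qed

lemma qpow_lt1: "0 < m \<Longrightarrow> q ^ m < 1"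
  using q0 q1 power_less_one_iff[of q m] by simp

lemma qexp_sums: "(\<lambda>k. q ^ (k * (k - 1) div 2) * z ^ k / qfact q k) sums qexp q z"
  unfolding qexp_def by (rule summable_sums[OF qexp_summable])

lemma qexp_funeq: "qexp q y = (1 + (1 - q) * y) * qexp q (q * y)"
proof -
  let ?a = "\<lambda>k. q ^ (k * (k - 1) div 2) * y ^ k / qfact q k"
  let ?b = "\<lambda>k. q ^ (k * (k - 1) div 2) * (q * y) ^ k / qfact q k"
  have d: "(\<lambda>k. ?a k - ?b k) sums (qexp q y - qexp q (q * y))" by (intro sums_diff qexp_sums)
  have e: "?a (Suc m) - ?b (Suc m) = (1 - q) * y * ?b m" for m
  proof -
    define T where "T = q ^ (m * (m - 1) div 2)"
    define F where "F = qfact q m"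
    have F0: "F > 0" using qfact_pos unfolding F_def by simp
    have I: "qint q (Suc m) = (1 - q * q ^ m) / (1 - q)" by (simp add: qint_def)
    have nz: "1 - q * q ^ m \<noteq> 0" using qpow_lt1[of "Suc m"] by simp
    have "?a (Suc m) - ?b (Suc m) = T * q ^ m * y * y ^ m * (1 - q * q ^ m) / (F * qint q (Suc m))"
      unfolding tri_Suc T_def F_def by (simp add: qfact_Suc power_add power_mult_distrib diff_divide_distrib[symmetric] algebra_simps)
    also have "\<dots> = (1 - q) * y * (T * (q * y) ^ m / F)"
      unfolding I using nz q1 F0 by (simp add: power_mult_distrib field_simps)
    finally show ?thesis unfolding T_def F_def .
  qed
  have "(\<lambda>k. ?a (Suc k) - ?b (Suc k)) sums (qexp q y - qexp q (q * y) - (?a 0 - ?b 0))"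
    using d sums_Suc_iff[of "\<lambda>k. ?a k - ?b k"] by simp
  then have "(\<lambda>k. (1 - q) * y * ?b k) sums (qexp q y - qexp q (q * y))"
    unfolding e by simp
  moreover have "(\<lambda>k. (1 - q) * y * ?b k) sums ((1 - q) * y * qexp q (q * y))"
    by (intro sums_mult qexp_sums)
  ultimately have "qexp q y - qexp q (q * y) = (1 - q) * y * qexp q (q * y)"
    by (rule sums_unique2)
  then show ?thesis by (simp add: algebra_simps)
qed

lemma ee_rec: "ee q j = (1 - q ^ j) * ee q (Suc j)"
proof -
  have "ee q j = (1 + (1 - q) * (-(q ^ j / (1 - q)))) * qexp q (q * (-(q ^ j / (1 - q))))"
    unfolding ee_def by (rule qexp_funeq)
  also have "1 + (1 - q) * (-(q ^ j / (1 - q))) = 1 - q ^ j" using q1 by (simp add: field_simps)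
  also have "q * (-(q ^ j / (1 - q))) = -(q ^ Suc j / (1 - q))" by simp
  finally show ?thesis by (simp add: ee_def)
qed

lemma ee_0: "ee q 0 = 0" using ee_rec[of 0] by simp

lemma qexp_near0:
  assumes "\<bar>y\<bar> \<le> 1/2"
  shows "\<bar>qexp q y - 1\<bar> \<le> 2 * \<bar>y\<bar>"
proof -
  let ?a = "\<lambda>k. q ^ (k * (k - 1) div 2) * y ^ k / qfact q k"
  have "(\<lambda>k. ?a (Suc k)) sums (qexp q y - 1)"
    using qexp_sums[of y] sums_Suc_iff[of ?a "qexp q y - 1"] by simp
  moreover have "(\<lambda>k. \<bar>y\<bar> * \<bar>y\<bar> ^ k) sums (\<bar>y\<bar> * (1 / (1 - \<bar>y\<bar>)))"
    using assms by (intro sums_mult geometric_sums) auto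
  moreover have "\<bar>?a (Suc k)\<bar> \<le> \<bar>y\<bar> * \<bar>y\<bar> ^ k" for k
  proof -
    have "\<bar>?a (Suc k)\<bar> = q ^ (Suc k * (Suc k - 1) div 2) * \<bar>y\<bar> ^ Suc k / qfact q (Suc k)"
      using q0 qfact_pos[of "Suc k"] by (simp add: abs_mult power_abs)
    also have "\<dots> \<le> q ^ (Suc k * (Suc k - 1) div 2) * \<bar>y\<bar> ^ Suc k / 1"
      using qfact_ge1[of "Suc k"] q0 by (intro divide_left_mono) auto
    also have "\<dots> \<le> 1 * \<bar>y\<bar> ^ Suc k"
      using q0 q1 by (simp only: div_by_1, intro mult_right_mono power_le_one) auto
    finally show ?thesis by simp
  qed
  ultimately have "\<bar>qexp q y - 1\<bar> \<le> \<bar>y\<bar> * (1 / (1 - \<bar>y\<bar>))"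
    by (rule abs_sums_le[rotated])
  also have "\<dots> \<le> \<bar>y\<bar> * (1 / (1/2))"
    using assms by (intro mult_left_mono divide_left_mono) auto
  finally show ?thesis by simp
qed

lemma ee_lim: "ee q \<longlonglongrightarrow> 1"
proof -
  have l: "(\<lambda>j. q ^ j / (1 - q)) \<longlonglongrightarrow> 0"
    using q0 q1 by (intro tendsto_divide_zero LIMSEQ_power_zero) auto
  have ev: "eventually (\<lambda>j. q ^ j / (1 - q) < 1/2) sequentially"
    by (rule order_tendstoD(2)[OF l]) simp
  have "(\<lambda>j. ee q j - 1) \<longlonglongrightarrow> 0"
  proof (rule Lim_null_comparison)
    show "eventually (\<lambda>j. norm (ee q j - 1) \<le> 2 * (q ^ j / (1 - q))) sequentially"
    proof (rule eventually_mono[OF ev])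
      fix j assume lt: "q ^ j / (1 - q) < 1/2"
      have p: "0 \<le> q ^ j / (1 - q)" using q0 q1 by simp
      have ab1: "\<bar>-(q ^ j / (1 - q))\<bar> = q ^ j / (1 - q)"
        by (simp only: abs_minus_cancel abs_of_nonneg[OF p])
      have ab: "\<bar>-(q ^ j / (1 - q))\<bar> = q ^ j / (1 - q)" "\<bar>-(q ^ j / (1 - q))\<bar> \<le> 1/2"
        using ab1 lt by linarith+
      show "norm (ee q j - 1) \<le> 2 * (q ^ j / (1 - q))"
        using qexp_near0[OF ab(2)] unfolding ab(1) by (simp add: ee_def)
    qed
    show "(\<lambda>j. 2 * (q ^ j / (1 - q))) \<longlonglongrightarrow> 0"
      using tendsto_mult_right_zero[OF l, of 2] by simp
  qed
  then show ?thesis by (rule LIM_zero_cancel)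
qed

lemma ee_pos: "0 \<le> ee q (Suc j)"
proof (rule ccontr)
  assume neg: "\<not> 0 \<le> ee q (Suc j)"
  have "ee q (Suc j + i) \<le> ee q (Suc j)" for i
  proof (induction i)
    case 0 then show ?case by simp
  next
    case (Suc i)
    let ?m = "Suc j + i"
    have f: "0 < 1 - q ^ ?m" "1 - q ^ ?m \<le> 1"
      using q0 q1 qpow_lt1[of ?m] by auto
    have em: "ee q ?m < 0" using Suc neg by simp
    have r: "ee q ?m = (1 - q ^ ?m) * ee q (Suc ?m)" by (rule ee_rec)
    then have "ee q (Suc ?m) < 0" using em f by (simp add: mult_less_0_iff)
    then have "(1 - q ^ ?m) * ee q (Suc ?m) \<ge> 1 * ee q (Suc ?m)"
      using f by (intro mult_right_mono_neg) auto
    then show ?case using r Suc by simp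
  qed
  then have "\<forall>n\<ge>Suc j. ee q n \<le> ee q (Suc j)"
    by (auto dest!: le_Suc_ex)
  then have "1 \<le> ee q (Suc j)"
    by (intro LIMSEQ_le_const2[OF ee_lim, of "ee q (Suc j)"]) blast
  then show False using neg by simp
qed

lemma ee_le1: "ee q (Suc j) \<le> 1"
proof -
  have "ee q (Suc j) \<le> ee q (Suc j + i)" for i
  proof (induction i)
    case 0 then show ?case by simp
  next
    case (Suc i)
    let ?m = "Suc j + i"
    have f: "0 \<le> 1 - q ^ ?m" "1 - q ^ ?m \<le> 1"
      using q0 q1 power_le_one[of q ?m] by auto
    have "ee q ?m = (1 - q ^ ?m) * ee q (Suc ?m)" by (rule ee_rec)
    also have "\<dots> \<le> 1 * ee q (Suc ?m)"
      using f ee_pos[of ?m] by (intro mult_right_mono) auto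
    finally show ?case using Suc by simp
  qed
  then have "\<forall>n\<ge>Suc j. ee q (Suc j) \<le> ee q n"
    by (auto dest!: le_Suc_ex)
  then show ?thesis
    by (intro LIMSEQ_le_const[OF ee_lim, of "ee q (Suc j)"]) blast
qed

lemma HH_sums: "1 \<le> m \<Longrightarrow> (\<lambda>j. q ^ (j * m) * ee q (Suc j)) sums HH q m"
proof -
  assume m: "1 \<le> m"
  have "q ^ m < 1" using m by (intro qpow_lt1) simp
  then have "summable (\<lambda>j. (q ^ m) ^ j)" using q0 by (intro summable_geometric) simp
  then have "summable (\<lambda>j. q ^ (j * m) * ee q (Suc j))"
  proof (rule summable_comparison_test[rotated])
    show "\<exists>N. \<forall>j\<ge>N. norm (q ^ (j * m) * ee q (Suc j)) \<le> (q ^ m) ^ j"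
    proof (intro exI allI impI)
      fix j
      have "norm (q ^ (j * m) * ee q (Suc j)) = q ^ (j * m) * ee q (Suc j)"
        using q0 ee_pos[of j] by simp
      also have "\<dots> \<le> q ^ (j * m) * 1" using q0 ee_le1[of j] by (intro mult_left_mono) auto
      finally show "norm (q ^ (j * m) * ee q (Suc j)) \<le> (q ^ m) ^ j"
        by (simp add: power_mult[symmetric] mult.commute)
    qed
  qed
  then show ?thesis unfolding HH_def by (rule summable_sums)
qed

lemma HH_1: "HH q 1 = 1"
proof -
  have "(\<lambda>j. ee q (Suc j) - ee q j) sums (1 - ee q 0)" by (rule telescope_sums[OF ee_lim])
  moreover have "ee q (Suc j) - ee q j = q ^ (j * 1) * ee q (Suc j)" for j
    using ee_rec[of j] by (simp add: algebra_simps)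
  ultimately have "(\<lambda>j. q ^ (j * 1) * ee q (Suc j)) sums 1" using ee_0 by simp
  then show ?thesis using HH_sums[of 1] sums_unique2 by blast
qed

lemma HH_Suc: "1 \<le> m \<Longrightarrow> HH q (Suc m) = (1 - q ^ m) * HH q m"
proof -
  assume m: "1 \<le> m"
  have "(\<lambda>j. q ^ (j * m) * ee q (Suc j) - q ^ (j * Suc m) * ee q (Suc j)) sums (HH q m - HH q (Suc m))"
    using m by (intro sums_diff HH_sums) auto
  moreover have "q ^ (j * m) * ee q (Suc j) - q ^ (j * Suc m) * ee q (Suc j) = q ^ (j * m) * ee q j" for j
    by (subst ee_rec[of j]) (simp add: power_add algebra_simps)
  ultimately have A: "(\<lambda>j. q ^ (j * m) * ee q j) sums (HH q m - HH q (Suc m))" by simp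
  have "(\<lambda>j. q ^ m * (q ^ (j * m) * ee q (Suc j))) sums (q ^ m * HH q m)"
    using m by (intro sums_mult HH_sums)
  moreover have "q ^ m * (q ^ (j * m) * ee q (Suc j)) = q ^ (Suc j * m) * ee q (Suc j)" for j
    by (simp add: power_add)
  ultimately have "(\<lambda>j. q ^ (Suc j * m) * ee q (Suc j)) sums (q ^ m * HH q m)" by simp
  then have "(\<lambda>j. q ^ (j * m) * ee q j) sums (q ^ m * HH q m + q ^ (0 * m) * ee q 0)"
    using sums_Suc_iff[of "\<lambda>j. q ^ (j * m) * ee q j"] by simp
  then have "(\<lambda>j. q ^ (j * m) * ee q j) sums (q ^ m * HH q m)" using ee_0 by simp
  with A have "HH q m - HH q (Suc m) = q ^ m * HH q m" by (rule sums_unique2)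
  then show ?thesis by (simp add: algebra_simps)
qed

lemma HH_qfact: "HH q (Suc k) = qfact q k * (1 - q) ^ k"
proof (induction k)
  case 0 then show ?case using HH_1 by simp
next
  case (Suc k)
  have "HH q (Suc (Suc k)) = (1 - q ^ Suc k) * HH q (Suc k)" by (rule HH_Suc) simp
  also have "1 - q ^ Suc k = qint q (Suc k) * (1 - q)" using q1 by (simp add: qint_def)
  finally show ?case using Suc by (simp add: qfact_Suc)
qed

lemma HH_pos: "0 < HH q (Suc k)"
  using HH_qfact[of k] qfact_pos[of k] q1 by simp
end


definition wBS :: "real \<Rightarrow> nat \<Rightarrow> nat \<Rightarrow> nat \<Rightarrow> real" where
  "wBS q n k j = qint q n * ((1 - q) * (q / (1 - q ^ n))) *
     ((1 / q ^ (k + 1)) * sqBS q n k (q / (1 - q ^ n) * q ^ j) * q ^ j)"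

definition M1 :: "real \<Rightarrow> nat \<Rightarrow> real" where "M1 q k = q * qint q (Suc k) / q ^ k"
definition M2 :: "real \<Rightarrow> nat \<Rightarrow> real" where "M2 q k = q ^ 2 * qint q (Suc k) * qint q (Suc (Suc k)) / q ^ (2 * k)"
definition A1 :: "real \<Rightarrow> nat \<Rightarrow> real" where "A1 q k = q * qint q k / q ^ k"

definition uBS :: "real \<Rightarrow> nat \<Rightarrow> nat \<Rightarrow> nat \<Rightarrow> real" where
  "uBS q n k j = qint q n * (q / (1 - q ^ n) * q ^ j) / q ^ k"

context fixes q :: real and n :: nat assumes q0: "0 < q" and q1: "q < 1" and n1: "1 \<le> n"
begin

lemma qn_lt1: "q ^ n < 1" using qpow_lt1[OF q0 q1, of n] n1 by simp

lemma gen1: "(a::real) \<noteq> 0 \<Longrightarrow> (a / b) * (c / a * d) = c * d / b"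
  by (simp add: field_simps)

lemma gen2: "(a::real) \<noteq> 0 \<Longrightarrow> b \<noteq> 0 \<Longrightarrow> (a / b) * (b * (c / a)) = c"
  by (simp add: field_simps)

lemma s1: "qint q n * (q / (1 - q ^ n) * q ^ j) = q ^ Suc j / (1 - q)"
  using gen1[of "1 - q ^ n" "1 - q" q "q ^ j"] qn_lt1 unfolding qint_def by simp

lemma s3: "qint q n * ((1 - q) * (q / (1 - q ^ n))) = q"
  using gen2[of "1 - q ^ n" "1 - q" q] qn_lt1 q1 unfolding qint_def by simp

lemma uBS_eq: "uBS q n k j = q ^ Suc j / ((1 - q) * q ^ k)"
  unfolding uBS_def s1 by simp

lemma uBS_nonneg: "0 \<le> uBS q n k j"
  unfolding uBS_eq using q0 q1 by simp

lemma wBS_eq: "wBS q n k j = q ^ (j * Suc k) * ee q (Suc j) / HH q (Suc k)"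
proof -
  define X where "X = q ^ Suc j / (1 - q)"
  have e: "sqBS q n k (q / (1 - q ^ n) * q ^ j) = ee q (Suc j) * X ^ k / qfact q k"
  proof -
    have "- qint q n * (q / (1 - q ^ n) * q ^ j) = -(q ^ Suc j / (1 - q))"
      using s1[of j] by simp
    then show ?thesis unfolding sqBS_def ee_def X_def s1 by simp
  qed
  have p: "q * q ^ (Suc j * k) * q ^ j = q ^ (j * Suc k) * q ^ (k + 1)"
  proof -
    have "q * q ^ (Suc j * k) * q ^ j = q ^ (1 + Suc j * k + j)" by (simp add: power_add)
    also have "1 + Suc j * k + j = j * Suc k + (k + 1)" by (simp add: algebra_simps)
    finally show ?thesis by (simp add: power_add)
  qed
  have Xk: "X ^ k = q ^ (Suc j * k) / (1 - q) ^ k"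
    unfolding X_def by (simp only: power_divide power_mult)
  have "wBS q n k j = q * ((1 / q ^ (k + 1)) * (ee q (Suc j) * X ^ k / qfact q k) * q ^ j)"
    unfolding wBS_def s3 e ..
  also have "\<dots> = (q * q ^ (Suc j * k) * q ^ j) * ee q (Suc j) / (q ^ (k + 1) * (qfact q k * (1 - q) ^ k))"
    unfolding Xk by (simp add: mult_ac)
  also have "\<dots> = q ^ (j * Suc k) * ee q (Suc j) / (qfact q k * (1 - q) ^ k)"
    unfolding p using q0 by simp
  finally show ?thesis using HH_qfact[OF q0 q1, of k] by simp
qed

lemma wBS_nonneg: "0 \<le> wBS q n k j"
  unfolding wBS_eq using q0 ee_pos[OF q0 q1, of j] HH_pos[OF q0 q1, of k] by simp

lemma wBS_mom: "(\<lambda>j. wBS q n k j * uBS q n k j ^ m) sums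
   (q ^ m / ((1 - q) ^ m * q ^ (k * m)) * HH q (Suc k + m) / HH q (Suc k))"
proof -
  define c where "c = q ^ m / ((1 - q) ^ m * q ^ (k * m) * HH q (Suc k))"
  have "wBS q n k j * uBS q n k j ^ m = c * (q ^ (j * (Suc k + m)) * ee q (Suc j))" for j
  proof -
    have pw: "q ^ (j * Suc k) * q ^ (Suc j * m) = q ^ m * q ^ (j * (Suc k + m))"
      by (simp add: power_add[symmetric] algebra_simps)
    have um: "uBS q n k j ^ m = q ^ (Suc j * m) / ((1 - q) ^ m * q ^ (k * m))"
      unfolding uBS_eq by (simp only: power_divide power_mult_distrib power_mult)
    have "wBS q n k j * uBS q n k j ^ m =
      (q ^ (j * Suc k) * q ^ (Suc j * m)) * ee q (Suc j) / ((1 - q) ^ m * q ^ (k * m) * HH q (Suc k))"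
      unfolding wBS_eq um by (simp add: mult_ac)
    also have "\<dots> = c * (q ^ (j * (Suc k + m)) * ee q (Suc j))"
      unfolding pw c_def by simp
    finally show ?thesis .
  qed
  moreover have "(\<lambda>j. c * (q ^ (j * (Suc k + m)) * ee q (Suc j))) sums (c * HH q (Suc k + m))"
    by (intro sums_mult HH_sums[OF q0 q1]) simp
  ultimately show ?thesis unfolding c_def by simp
qed


lemma wBS_sum0: "(\<lambda>j. wBS q n k j) sums 1"
  using wBS_mom[of k 0] HH_pos[OF q0 q1, of k] by simp

lemma wBS_sum1: "(\<lambda>j. wBS q n k j * uBS q n k j) sums M1 q k"
proof -
  have h: "HH q (Suc k + 1) = (1 - q ^ Suc k) * HH q (Suc k)"
    using HH_Suc[OF q0 q1, of "Suc k"] by simp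
  have "q ^ 1 / ((1 - q) ^ 1 * q ^ (k * 1)) * HH q (Suc k + 1) / HH q (Suc k)
      = q / ((1 - q) * q ^ k) * (1 - q ^ Suc k)"
    unfolding h using HH_pos[OF q0 q1, of k] by simp
  also have "\<dots> = M1 q k" unfolding M1_def qint_def by simp
  finally show ?thesis using wBS_mom[of k 1] by simp
qed

lemma wBS_sum2: "(\<lambda>j. wBS q n k j * uBS q n k j ^ 2) sums M2 q k"
proof -
  have h: "HH q (Suc k + 2) = (1 - q ^ Suc (Suc k)) * ((1 - q ^ Suc k) * HH q (Suc k))"
    using HH_Suc[OF q0 q1, of "Suc (Suc k)"] HH_Suc[OF q0 q1, of "Suc k"] by simp
  have "q ^ 2 / ((1 - q) ^ 2 * q ^ (k * 2)) * HH q (Suc k + 2) / HH q (Suc k)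
      = q ^ 2 / ((1 - q) ^ 2 * q ^ (k * 2)) * ((1 - q ^ Suc (Suc k)) * (1 - q ^ Suc k))"
    unfolding h using HH_pos[OF q0 q1, of k] by simp
  also have "\<dots> = M2 q k" unfolding M2_def qint_def by (simp add: power2_eq_square mult.commute)
  finally show ?thesis using wBS_mom[of k 2] by simp
qed

end

context fixes q :: real and x :: real assumes q0: "0 < q" and q1: "q < 1" and x0: "0 \<le> x"
begin

lemma qint_pos': "0 < m \<Longrightarrow> 0 < qint q m"
  using qint_ge1[OF q0 q1, of m] by simp

lemma qint_add: "qint q (a + b) = qint q a + q ^ a * qint q b"
  using q1 unfolding qint_def by (simp add: power_add field_simps)

lemma qpoch_Suc: "qpoch q x (Suc m) = qpoch q x m * (1 + q ^ m * x)"
  unfolding qpoch_def by simp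

lemma qpoch_pos: "0 < qpoch q x m"
  unfolding qpoch_def using q0 x0 by (intro prod_pos) (auto intro: add_pos_nonneg)

lemma qfact0': "qfact q 0 = 1" by (simp add: qfact_def)

lemma qbinom_0: "qbinom q m 0 = 1"
  unfolding qbinom_def qfact0' using qfact_pos[OF q0 q1, of m] by simp

lemma qbinom_diag: "qbinom q m m = 1"
  unfolding qbinom_def using qfact_pos[OF q0 q1, of m] by (simp add: qfact0')

lemma qbinom_nonneg: "0 \<le> qbinom q m k"
  unfolding qbinom_def using qfact_pos[OF q0 q1] by (simp add: less_imp_le)

lemma p_nonneg: "0 \<le> pqBS q n k x"
  unfolding pqBS_def using qbinom_nonneg qpoch_pos[of "n + k"] x0 q0
  by (intro divide_nonneg_pos mult_nonneg_nonneg) auto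


lemma A1_0: "A1 q 0 = 0" unfolding A1_def by (simp add: qint_def)

lemma A1_Suc: "A1 q (Suc k) = qint q (Suc k) / q ^ k"
  unfolding A1_def using q0 by simp

lemma A1_Suc': "A1 q (Suc k) = 1 + A1 q k / q"
  unfolding A1_Suc A1_def qint_Suc[OF q0 q1] using q0 by (simp add: field_simps)

lemma qbinom_shift: "qbinom q (Suc n' + k) (Suc k) * qint q (Suc k) = qint q (Suc n') * qbinom q (Suc n' + k) k"
proof -
  have a: "Suc n' + k - Suc k = n'" "Suc n' + k - k = Suc n'" by simp_all
  have f: "qfact q (Suc k) = qfact q k * qint q (Suc k)" "qfact q (Suc n') = qfact q n' * qint q (Suc n')"
    using qfact_Suc[OF q0 q1] by blast+
  show ?thesis unfolding qbinom_def a f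
    using qfact_pos[OF q0 q1, of k] qfact_pos[OF q0 q1, of n'] qint_pos'[of "Suc k"] qint_pos'[of "Suc n'"]
    by (simp add: field_simps)
qed

lemma qbinom_pascal: "qbinom q (Suc n' + Suc k) (Suc k) = qbinom q (Suc n' + k) (Suc k) + q ^ Suc n' * qbinom q (Suc n' + k) k"
proof -
  have a: "Suc n' + Suc k - Suc k = Suc n'" "Suc n' + k - Suc k = n'" "Suc n' + k - k = Suc n'" by simp_all
  have f: "qfact q (Suc k) = qfact q k * qint q (Suc k)" "qfact q (Suc n') = qfact q n' * qint q (Suc n')"
     "qfact q (Suc n' + Suc k) = qfact q (Suc n' + k) * qint q (Suc n' + Suc k)"
    using qfact_Suc[OF q0 q1] by auto
  have i: "qint q (Suc n' + Suc k) = qint q (Suc n') + q ^ Suc n' * qint q (Suc k)" by (rule qint_add)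
  show ?thesis unfolding qbinom_def a f i
    using qfact_pos[OF q0 q1, of k] qfact_pos[OF q0 q1, of n'] qfact_pos[OF q0 q1, of "Suc n' + k"]
      qint_pos'[of "Suc k"] qint_pos'[of "Suc n'"]
    by (simp add: field_simps)
qed

lemma p_shift: "1 \<le> n \<Longrightarrow> pqBS q n (Suc k) x * A1 q (Suc k) = qint q n * x * pqBS q (Suc n) k x"
proof -
  assume "1 \<le> n"
  then obtain n' where n: "n = Suc n'" by (cases n) auto
  have e: "Suc n' + Suc k - 1 = Suc n' + k" "Suc (Suc n') + k - 1 = Suc n' + k"
     "Suc (Suc n') + k = Suc n' + Suc k" by simp_all
  have t: "q ^ (Suc k * (Suc k - 1) div 2) = q ^ (k * (k - 1) div 2) * q ^ k"
    unfolding tri_Suc by (simp add: power_add)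
  have "pqBS q n (Suc k) x * A1 q (Suc k) =
    (qbinom q (Suc n' + k) (Suc k) * qint q (Suc k)) * q ^ (k * (k - 1) div 2) * x * x ^ k / qpoch q x (Suc n' + Suc k)"
    unfolding pqBS_def n e t A1_Suc using q0 by (simp add: field_simps)
  also have "\<dots> = qint q n * x * pqBS q (Suc n) k x"
    unfolding qbinom_shift pqBS_def n e by (simp add: field_simps)
  finally show ?thesis .
qed

lemma p_rel: "1 \<le> n \<Longrightarrow> pqBS q (Suc n) (Suc k) x * (1 + q ^ (n + Suc k) * x)
   = pqBS q n (Suc k) x + q ^ (n + k) * x * pqBS q (Suc n) k x"
proof -
  assume "1 \<le> n"
  then obtain n' where n: "n = Suc n'" by (cases n) auto
  have e: "Suc n' + Suc k - 1 = Suc n' + k" "Suc (Suc n') + k - 1 = Suc n' + k"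
     "Suc (Suc n') + k = Suc n' + Suc k" "Suc (Suc n') + Suc k - 1 = Suc n' + Suc k"
     "Suc (Suc n') + Suc k = Suc (Suc n' + Suc k)" by simp_all
  have t: "q ^ (Suc k * (Suc k - 1) div 2) = q ^ (k * (k - 1) div 2) * q ^ k"
    unfolding tri_Suc by (simp add: power_add)
  have pp: "qpoch q x (Suc (Suc n' + Suc k)) = qpoch q x (Suc n' + Suc k) * (1 + q ^ (Suc n' + Suc k) * x)"
    by (rule qpoch_Suc)
  define B1 where "B1 = qbinom q (Suc n' + k) (Suc k)"
  define B0 where "B0 = qbinom q (Suc n' + k) k"
  define T where "T = q ^ (k * (k - 1) div 2)"
  define P where "P = qpoch q x (Suc n' + Suc k)"
  define c where "c = 1 + q ^ (Suc n' + Suc k) * x"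
  have "0 \<le> q ^ (Suc n' + Suc k) * x" using q0 x0 by simp
  then have pos: "P \<noteq> 0" "c \<noteq> 0"
    using qpoch_pos[of "Suc n' + Suc k"] unfolding P_def c_def by auto
  have G: "\<And>a b y. (B1 + a * B0) * (T * b) * (x * y) / (P * c) * c = B1 * (T * b) * (x * y) / P + (a * b) * x * (B0 * T * y / P)"
    using pos by (simp add: field_simps)
  have L: "pqBS q (Suc n) (Suc k) x = (B1 + q ^ Suc n' * B0) * (T * q ^ k) * (x * x ^ k) / (P * c)"
    using qbinom_pascal[of n' k]
    unfolding pqBS_def n e t pp B1_def B0_def T_def P_def c_def by simp
  have R1: "pqBS q n (Suc k) x = B1 * (T * q ^ k) * (x * x ^ k) / P"
    unfolding pqBS_def n e t B1_def T_def P_def by simp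
  have R2: "pqBS q (Suc n) k x = B0 * T * x ^ k / P"
    unfolding pqBS_def n e B0_def T_def P_def by simp
  have cc: "1 + q ^ (n + Suc k) * x = c" unfolding c_def n ..
  have qq: "q ^ (n + k) = q ^ Suc n' * q ^ k" unfolding n by (simp add: power_add)
  show ?thesis unfolding L R1 R2 cc qq by (rule G)
qed

lemma p_rel0: "1 \<le> n \<Longrightarrow> pqBS q n 0 x = pqBS q (Suc n) 0 x * (1 + q ^ n * x)"
proof -
  assume "1 \<le> n"
  have pos: "0 < qpoch q x n" "0 < 1 + q ^ n * x"
    using qpoch_pos q0 x0 by (auto intro: add_pos_nonneg)
  have "qpoch q x (Suc n) = qpoch q x n * (1 + q ^ n * x)" by (rule qpoch_Suc)
  then show ?thesis unfolding pqBS_def qbinom_0 using pos by simp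
qed


lemma p_base: "(\<lambda>k. pqBS q 1 k x) sums 1"
proof -
  define b where "b k = q ^ (k * (k - 1) div 2) * x ^ k / qpoch q x k" for k
  define r where "r = x / (1 + x)"
  have r: "0 \<le> r" "r < 1" unfolding r_def using x0 by auto
  have bS: "b (Suc k) = b k * (q ^ k * x / (1 + q ^ k * x))" for k
  proof -
    have "0 < 1 + q ^ k * x" using q0 x0 by (intro add_pos_nonneg) auto
    then show ?thesis unfolding b_def tri_Suc qpoch_Suc using qpoch_pos[of k]
      by (simp add: power_add field_simps)
  qed
  have fac: "0 \<le> q ^ k * x / (1 + q ^ k * x)" "q ^ k * x / (1 + q ^ k * x) \<le> r" for k
  proof -
    have a: "0 \<le> q ^ k * x" using q0 x0 by simp
    have "q ^ k \<le> 1" using q0 q1 by (simp add: power_le_one)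
    then have "q ^ k * x \<le> 1 * x" using x0 by (rule mult_right_mono)
    then show "0 \<le> q ^ k * x / (1 + q ^ k * x)" "q ^ k * x / (1 + q ^ k * x) \<le> r"
      using a x0 unfolding r_def by (auto simp: divide_simps algebra_simps)
  qed
  have bb: "0 \<le> b k \<and> b k \<le> r ^ k" for k
  proof (induction k)
    case 0 then show ?case by (simp add: b_def qpoch_def)
  next
    case (Suc k)
    have "b k * (q ^ k * x / (1 + q ^ k * x)) \<le> r ^ k * r"
      using Suc fac[of k] r by (intro mult_mono) auto
    moreover have "0 \<le> b k * (q ^ k * x / (1 + q ^ k * x))"
      using Suc fac[of k] by (intro mult_nonneg_nonneg) auto
    ultimately show ?case unfolding bS by (simp add: mult.commute)
  qed
  have "b \<longlonglongrightarrow> 0"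
  proof (rule Lim_null_comparison)
    show "\<forall>\<^sub>F k in sequentially. norm (b k) \<le> r ^ k" using bb by simp
    show "(\<lambda>k. r ^ k) \<longlonglongrightarrow> 0" using r by (intro LIMSEQ_power_zero) simp
  qed
  then have "(\<lambda>k. b k - b (Suc k)) sums (b 0 - 0)" by (rule telescope_sums')
  moreover have "b k - b (Suc k) = pqBS q 1 k x" for k
  proof -
    have "0 < 1 + q ^ k * x" using q0 x0 by (intro add_pos_nonneg) auto
    have e: "pqBS q 1 k x = q ^ (k * (k - 1) div 2) * x ^ k / (qpoch q x k * (1 + q ^ k * x))"
      unfolding pqBS_def using qbinom_diag[of k] qpoch_Suc[of k] by simp
    have G: "Z / P - Z / P * (a / (1 + a)) = Z / (P * (1 + a))" if "1 + a \<noteq> 0" for P a Z :: real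
    proof -
      have "1 - a / (1 + a) = 1 / (1 + a)" using that by (simp add: field_simps)
      have "Z / P - Z / P * (a / (1 + a)) = Z / P * (1 - a / (1 + a))" by (simp add: right_diff_distrib)
      also have "\<dots> = Z / (P * (1 + a))" using \<open>1 - a / (1 + a) = 1 / (1 + a)\<close> by simp
      finally show ?thesis .
    qed
    show ?thesis unfolding bS e unfolding b_def
      by (rule G) (use \<open>0 < 1 + q ^ k * x\<close> in simp)
  qed
  moreover have "b 0 = 1" by (simp add: b_def qpoch_def)
  ultimately show ?thesis by simp
qed

lemma p_step:
  assumes n1: "1 \<le> n" and S: "(\<lambda>k. pqBS q n k x) sums 1"
  shows "(\<lambda>k. pqBS q (Suc n) k x) sums 1"
proof -
  define D where "D k = q ^ (n + k) * x * pqBS q (Suc n) k x" for k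
  have rel: "pqBS q n (Suc k) x = pqBS q (Suc n) (Suc k) x + D (Suc k) - D k" for k
    using p_rel[OF n1, of k] unfolding D_def by (simp add: algebra_simps)
  have rel0: "pqBS q n 0 x = pqBS q (Suc n) 0 x + D 0"
    using p_rel0[OF n1] unfolding D_def by (simp add: algebra_simps)
  have part: "(\<Sum>k<Suc K. pqBS q n k x) = (\<Sum>k<Suc K. pqBS q (Suc n) k x) + D K" for K
  proof (induction K)
    case 0 then show ?case using rel0 by simp
  next
    case (Suc K) then show ?case using rel[of K] by simp
  qed
  have Dn: "0 \<le> D k" for k unfolding D_def using q0 x0 p_nonneg by simp
  have le1: "(\<Sum>k<K. pqBS q (Suc n) k x) \<le> 1" for K
  proof (cases K)
    case 0 then show ?thesis by simp
  next
    case (Suc K')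
    have "(\<Sum>k<Suc K'. pqBS q (Suc n) k x) \<le> (\<Sum>k<Suc K'. pqBS q n k x)"
      using part[of K'] Dn[of K'] by simp
    also have "\<dots> \<le> (\<Sum>k. pqBS q n k x)"
      using S p_nonneg by (intro sum_le_suminf) (auto simp: sums_iff)
    also have "\<dots> = 1" using S by (simp add: sums_iff)
    finally show ?thesis using Suc by simp
  qed
  have sm: "summable (\<lambda>k. pqBS q (Suc n) k x)"
    using p_nonneg le1 by (intro summableI_nonneg_bounded) auto
  have z: "(\<lambda>k. pqBS q (Suc n) k x) \<longlonglongrightarrow> 0" by (rule summable_LIMSEQ_zero[OF sm])
  have Dz: "D \<longlonglongrightarrow> 0"
  proof (rule Lim_null_comparison)
    show "\<forall>\<^sub>F k in sequentially. norm (D k) \<le> x * pqBS q (Suc n) k x"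
    proof (intro always_eventually allI)
      fix k
      have "q ^ (n + k) \<le> 1" using q0 q1 by (simp add: power_le_one)
      then have "q ^ (n + k) * (x * pqBS q (Suc n) k x) \<le> 1 * (x * pqBS q (Suc n) k x)"
        using x0 p_nonneg by (intro mult_right_mono) auto
      then show "norm (D k) \<le> x * pqBS q (Suc n) k x" using Dn[of k] unfolding D_def by (simp add: mult.assoc)
    qed
    show "(\<lambda>k. x * pqBS q (Suc n) k x) \<longlonglongrightarrow> 0" using tendsto_mult_right_zero[OF z] by simp
  qed
  have l1: "(\<lambda>K. \<Sum>k<Suc K. pqBS q (Suc n) k x) \<longlonglongrightarrow> (\<Sum>k. pqBS q (Suc n) k x)"
    by (rule LIMSEQ_Suc[OF summable_LIMSEQ[OF sm]])
  have "(\<lambda>K. \<Sum>k<Suc K. pqBS q n k x) \<longlonglongrightarrow> 1"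
    using LIMSEQ_Suc[OF S[unfolded sums_def]] .
  then have "(\<lambda>K. (\<Sum>k<Suc K. pqBS q n k x) - D K) \<longlonglongrightarrow> 1 - 0"
    by (intro tendsto_diff Dz)
  then have l2: "(\<lambda>K. \<Sum>k<Suc K. pqBS q (Suc n) k x) \<longlonglongrightarrow> 1" using part by simp
  have "(\<Sum>k. pqBS q (Suc n) k x) = 1" using LIMSEQ_unique[OF l1 l2] .
  then show ?thesis using sm by (simp add: sums_iff)
qed

lemma p_sum: "1 \<le> n \<Longrightarrow> (\<lambda>k. pqBS q n k x) sums 1"
proof (induction n rule: nat_induct_at_least)
  case base then show ?case using p_base by simp
next
  case (Suc n) then show ?case using p_step by simp
qed

lemma p_sumA1: "1 \<le> n \<Longrightarrow> (\<lambda>k. pqBS q n k x * A1 q k) sums (qint q n * x)"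
proof -
  assume n1: "1 \<le> n"
  have "(\<lambda>k. qint q n * x * pqBS q (Suc n) k x) sums (qint q n * x * 1)"
    using p_sum[of "Suc n"] n1 by (intro sums_mult) simp
  then have "(\<lambda>k. pqBS q n (Suc k) x * A1 q (Suc k)) sums (qint q n * x)"
    using p_shift[OF n1] by simp
  then show ?thesis using sums_Suc_iff[of "\<lambda>k. pqBS q n k x * A1 q k"] A1_0 by simp
qed

lemma p_sumA1sq: "1 \<le> n \<Longrightarrow> (\<lambda>k. pqBS q n k x * A1 q k ^ 2) sums (qint q n * x * (1 + qint q (Suc n) * x / q))"
proof -
  assume n1: "1 \<le> n"
  have "(\<lambda>k. pqBS q (Suc n) k x + pqBS q (Suc n) k x * A1 q k / q) sums (1 + qint q (Suc n) * x / q)"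
    using n1 by (intro sums_add sums_divide p_sum p_sumA1) auto
  then have "(\<lambda>k. qint q n * x * (pqBS q (Suc n) k x + pqBS q (Suc n) k x * A1 q k / q)) sums
      (qint q n * x * (1 + qint q (Suc n) * x / q))"
    by (rule sums_mult)
  moreover have "qint q n * x * (pqBS q (Suc n) k x + pqBS q (Suc n) k x * A1 q k / q) =
      pqBS q n (Suc k) x * A1 q (Suc k) ^ 2" for k
  proof -
    have "pqBS q n (Suc k) x * A1 q (Suc k) ^ 2 = (pqBS q n (Suc k) x * A1 q (Suc k)) * A1 q (Suc k)"
      by (simp add: power2_eq_square)
    also have "\<dots> = qint q n * x * pqBS q (Suc n) k x * A1 q (Suc k)"
      by (simp only: p_shift[OF n1])
    also have "\<dots> = qint q n * x * pqBS q (Suc n) k x * (1 + A1 q k / q)"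
      by (simp only: A1_Suc')
    finally show ?thesis by (simp add: algebra_simps)
  qed
  ultimately have "(\<lambda>k. pqBS q n (Suc k) x * A1 q (Suc k) ^ 2) sums (qint q n * x * (1 + qint q (Suc n) * x / q))"
    by simp
  then show ?thesis using sums_Suc_iff[of "\<lambda>k. pqBS q n k x * A1 q k ^ 2"] A1_0 by simp
qed

end


lemma M1_A1: "0 < q \<Longrightarrow> q < 1 \<Longrightarrow> M1 q k = q + A1 q k"
  unfolding M1_def A1_def qint_Suc by (simp add: field_simps)

lemma M2_A1: "0 < q \<Longrightarrow> q < 1 \<Longrightarrow> M2 q k = (q + A1 q k) * (q + q ^ 2 + A1 q k)"
proof -
  assume q0: "0 < q" and q1: "q < 1"
  have a: "q + A1 q k = q * qint q (Suc k) / q ^ k" using M1_A1[OF q0 q1] by (simp add: M1_def)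
  have b: "q + q ^ 2 + A1 q k = q * qint q (Suc (Suc k)) / q ^ k"
    unfolding A1_def qint_Suc[OF q0 q1] using q0 by (simp add: field_simps power2_eq_square)
  show ?thesis unfolding a b M2_def by (simp add: power2_eq_square power_add mult_2)
qed

lemma qint_Suc': "0 < q \<Longrightarrow> q < 1 \<Longrightarrow> qint q (Suc n) = 1 + q * qint q n"
  unfolding qint_def by (simp add: field_simps)

lemma phi2_identity:
  fixes q N c x \<alpha> \<beta> :: real
  assumes q0: "0 < q" and c: "c = N + \<beta>" and cnz: "c \<noteq> 0"
  shows "1 / c ^ 2 * (N * x * (1 + (1 + q * N) * x / q))
     + ((2 * q + q ^ 2) / c ^ 2 + 2 * (\<alpha> / c - x) / c) * (N * x)
     + ((q ^ 2 + q ^ 3) / c ^ 2 + 2 * (\<alpha> / c - x) / c * q + (\<alpha> / c - x) ^ 2)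
   = x ^ 2 * (\<beta> ^ 2 / c ^ 2 + N / (q * c ^ 2)) + x * (((1 + q ^ 2) * N - 2 * q * \<beta> - 2 * \<alpha> * \<beta>) / c ^ 2)
     + (q ^ 2 + q ^ 3 + 2 * \<alpha> * q + \<alpha> ^ 2) / c ^ 2"
proof -
  have N: "N = c - \<beta>" using c by simp
  show ?thesis using q0 cnz unfolding N
    by (simp add: field_simps power2_eq_square power3_eq_cube)
qed


lemma abs_wdiff: "0 \<le> (w::real) \<Longrightarrow> \<bar>w * a - w * b\<bar> = w * \<bar>a - b\<bar>"
  by (simp add: abs_mult right_diff_distrib[symmetric])

definition YBS :: "real \<Rightarrow> real \<Rightarrow> real \<Rightarrow> nat \<Rightarrow> nat \<Rightarrow> nat \<Rightarrow> real" where
  "YBS \<alpha> \<beta> q n k j = (uBS q n k j + \<alpha>) / (qint q n + \<beta>)"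

definition Phi2 :: "real \<Rightarrow> real \<Rightarrow> real \<Rightarrow> nat \<Rightarrow> real \<Rightarrow> real" where
  "Phi2 \<alpha> \<beta> q n x = (let N = qint q n; c = N + \<beta> in
     x ^ 2 * (\<beta> ^ 2 / c ^ 2 + N / (q * c ^ 2)) + x * (((1 + q ^ 2) * N - 2 * q * \<beta> - 2 * \<alpha> * \<beta>) / c ^ 2)
     + (q ^ 2 + q ^ 3 + 2 * \<alpha> * q + \<alpha> ^ 2) / c ^ 2)"

context fixes q :: real and n :: nat and x \<alpha> \<beta> :: real
  assumes q0: "0 < q" and q1: "q < 1" and n1: "1 \<le> n" and x0: "0 \<le> x"
    and a0: "0 \<le> \<alpha>" and b0: "0 \<le> \<beta>"
begin

lemma N1: "1 \<le> qint q n" using qint_ge1[OF q0 q1 n1] .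

lemma cpos: "0 < qint q n + \<beta>" using N1 b0 by simp

lemma Y_nonneg: "0 \<le> YBS \<alpha> \<beta> q n k j"
  unfolding YBS_def using uBS_nonneg[OF q0 q1 n1] a0 cpos by simp

lemma inner2: "(\<lambda>j. wBS q n k j * (YBS \<alpha> \<beta> q n k j - x) ^ 2) sums
   (A1 q k ^ 2 / (qint q n + \<beta>) ^ 2
    + ((2 * q + q ^ 2) / (qint q n + \<beta>) ^ 2 + 2 * (\<alpha> / (qint q n + \<beta>) - x) / (qint q n + \<beta>)) * A1 q k
    + ((q ^ 2 + q ^ 3) / (qint q n + \<beta>) ^ 2 + 2 * (\<alpha> / (qint q n + \<beta>) - x) / (qint q n + \<beta>) * q
       + (\<alpha> / (qint q n + \<beta>) - x) ^ 2))"
proof -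
  define c where "c = qint q n + \<beta>"
  have c0: "c \<noteq> 0" using cpos unfolding c_def by simp
  define d where "d = \<alpha> / c - x"
  have pt: "wBS q n k j * (YBS \<alpha> \<beta> q n k j - x) ^ 2 =
    (1 / c ^ 2) * (wBS q n k j * uBS q n k j ^ 2) + (2 * d / c) * (wBS q n k j * uBS q n k j)
     + d ^ 2 * wBS q n k j" for j
    unfolding YBS_def c_def[symmetric] d_def using c0 by (simp add: field_simps power2_eq_square)
  have fe: "(\<lambda>j. wBS q n k j * (YBS \<alpha> \<beta> q n k j - x) ^ 2) = (\<lambda>j. (1 / c ^ 2) * (wBS q n k j * uBS q n k j ^ 2) + (2 * d / c) * (wBS q n k j * uBS q n k j)
     + d ^ 2 * wBS q n k j)" by (rule ext) (rule pt)
  have S: "(\<lambda>j. wBS q n k j * (YBS \<alpha> \<beta> q n k j - x) ^ 2) sums ((1 / c ^ 2) * M2 q k + (2 * d / c) * M1 q k + d ^ 2 * 1)"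
    unfolding fe
    by (intro sums_add sums_mult wBS_sum2[OF q0 q1 n1] wBS_sum1[OF q0 q1 n1] wBS_sum0[OF q0 q1 n1])
  have eq: "(1 / c ^ 2) * M2 q k + (2 * d / c) * M1 q k + d ^ 2 * 1 =
     A1 q k ^ 2 / c ^ 2 + ((2 * q + q ^ 2) / c ^ 2 + 2 * d / c) * A1 q k
     + ((q ^ 2 + q ^ 3) / c ^ 2 + 2 * d / c * q + d ^ 2)"
    unfolding M2_A1[OF q0 q1] M1_A1[OF q0 q1] using c0
    by (simp add: field_simps power2_eq_square power3_eq_cube)
  show ?thesis using S unfolding eq unfolding d_def c_def .
qed

lemma outer2: "(\<lambda>k. pqBS q n k x * (\<Sum>j. wBS q n k j * (YBS \<alpha> \<beta> q n k j - x) ^ 2)) sums Phi2 \<alpha> \<beta> q n x"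
proof -
  define c where "c = qint q n + \<beta>"
  have c0: "c \<noteq> 0" using cpos unfolding c_def by simp
  define d where "d = \<alpha> / c - x"
  define a1 where "a1 = (2 * q + q ^ 2) / c ^ 2 + 2 * d / c"
  define a0 where "a0 = (q ^ 2 + q ^ 3) / c ^ 2 + 2 * d / c * q + d ^ 2"
  have I: "(\<Sum>j. wBS q n k j * (YBS \<alpha> \<beta> q n k j - x) ^ 2) = A1 q k ^ 2 / c ^ 2 + a1 * A1 q k + a0" for k
    using inner2[of k] unfolding c_def[symmetric] d_def[symmetric] a1_def[symmetric] a0_def[symmetric]
    by (simp add: sums_iff)
  have "(\<lambda>k. (1 / c ^ 2) * (pqBS q n k x * A1 q k ^ 2) + a1 * (pqBS q n k x * A1 q k) + a0 * pqBS q n k x) sums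
     ((1 / c ^ 2) * (qint q n * x * (1 + qint q (Suc n) * x / q)) + a1 * (qint q n * x) + a0 * 1)"
    by (intro sums_add sums_mult p_sumA1sq[OF q0 q1 x0 n1] p_sumA1[OF q0 q1 x0 n1] p_sum[OF q0 q1 x0 n1])
  moreover have "(1 / c ^ 2) * (qint q n * x * (1 + qint q (Suc n) * x / q)) + a1 * (qint q n * x) + a0 * 1
     = Phi2 \<alpha> \<beta> q n x"
    unfolding Phi2_def Let_def c_def[symmetric] a1_def a0_def d_def qint_Suc'[OF q0 q1]
    using phi2_identity[OF q0 c_def c0, of x \<alpha>] by (simp add: algebra_simps)
  ultimately show ?thesis unfolding I by (simp add: algebra_simps)
qed


lemma Phi2_bound:
  assumes qh: "1/2 \<le> q"
  shows "Phi2 \<alpha> \<beta> q n x \<le> (6 + 2 * \<alpha> + \<alpha> ^ 2 + \<beta> ^ 2) * (1 + x ^ 2) / qint q n"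
proof -
  define N where "N = qint q n"
  define c where "c = N + \<beta>"
  have N1: "1 \<le> N" using N1 unfolding N_def .
  have cN: "N \<le> c" unfolding c_def using b0 by simp
  have cc: "N \<le> c ^ 2"
  proof -
    have "N * 1 \<le> c * c" using N1 cN by (intro mult_mono) auto
    then show ?thesis by (simp add: power2_eq_square)
  qed
  have NN: "N * N \<le> c ^ 2" using N1 cN by (simp add: power2_eq_square mult_mono)
  have cpos2: "0 < c ^ 2" using N1 cN by simp
  have inv: "1 / c ^ 2 \<le> 1 / N" using cc N1 cpos2 by (intro divide_left_mono) (auto intro!: mult_pos_pos)
  have t1: "\<beta> ^ 2 / c ^ 2 \<le> \<beta> ^ 2 / N"
    using inv by (simp add: divide_inverse mult_left_mono)
  have t2: "N / (q * c ^ 2) \<le> 2 / N"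
  proof -
    have "N / (q * c ^ 2) \<le> N / (q * (N * N))"
      using NN N1 q0 cpos2 by (intro divide_left_mono mult_left_mono) (auto intro!: mult_pos_pos)
    also have "\<dots> = 1 / (q * N)" using N1 by simp
    also have "\<dots> \<le> 1 / ((1/2) * N)" using qh N1 by (intro divide_left_mono mult_right_mono) (auto intro!: mult_pos_pos)
    finally show ?thesis by simp
  qed
  have t3: "((1 + q ^ 2) * N - 2 * q * \<beta> - 2 * \<alpha> * \<beta>) / c ^ 2 \<le> 2 / N"
  proof -
    have q2: "q ^ 2 \<le> 1" using q0 q1 by (simp add: power_le_one)
    have "(1 + q ^ 2) * N \<le> 2 * N" using q2 N1 by (intro mult_right_mono) auto
    moreover have "0 \<le> 2 * q * \<beta>" "0 \<le> 2 * \<alpha> * \<beta>" using q0 a0 b0 by auto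
    ultimately have "(1 + q ^ 2) * N - 2 * q * \<beta> - 2 * \<alpha> * \<beta> \<le> 2 * N" by linarith
    then have "((1 + q ^ 2) * N - 2 * q * \<beta> - 2 * \<alpha> * \<beta>) / c ^ 2 \<le> 2 * N / c ^ 2"
      using cpos2 by (intro divide_right_mono) auto
    also have "\<dots> \<le> 2 * N / (N * N)" using NN N1 cpos2 by (intro divide_left_mono) (auto intro!: mult_pos_pos)
    also have "\<dots> = 2 / N" using N1 by simp
    finally show ?thesis .
  qed
  have t4: "(q ^ 2 + q ^ 3 + 2 * \<alpha> * q + \<alpha> ^ 2) / c ^ 2 \<le> (2 + 2 * \<alpha> + \<alpha> ^ 2) / N"
  proof -
    have q2: "q ^ 2 \<le> 1" "q ^ 3 \<le> 1" using q0 q1 by (simp_all add: power_le_one)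
    have "\<alpha> * q \<le> \<alpha> * 1" using a0 q1 by (intro mult_left_mono) auto
    then have num: "q ^ 2 + q ^ 3 + 2 * \<alpha> * q + \<alpha> ^ 2 \<le> 2 + 2 * \<alpha> + \<alpha> ^ 2"
      using q2 by linarith
    have "(q ^ 2 + q ^ 3 + 2 * \<alpha> * q + \<alpha> ^ 2) / c ^ 2 \<le> (2 + 2 * \<alpha> + \<alpha> ^ 2) / c ^ 2"
      using num cpos2 by (intro divide_right_mono) auto
    also have "\<dots> \<le> (2 + 2 * \<alpha> + \<alpha> ^ 2) / N" using cc N1 a0 cpos2 by (intro divide_left_mono) (auto intro!: mult_pos_pos)
    finally show ?thesis .
  qed
  have x2: "0 \<le> x ^ 2" by simp
  have "Phi2 \<alpha> \<beta> q n x = x ^ 2 * (\<beta> ^ 2 / c ^ 2 + N / (q * c ^ 2)) + x * (((1 + q ^ 2) * N - 2 * q * \<beta> - 2 * \<alpha> * \<beta>) / c ^ 2)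
     + (q ^ 2 + q ^ 3 + 2 * \<alpha> * q + \<alpha> ^ 2) / c ^ 2"
    unfolding Phi2_def Let_def N_def c_def ..
  also have "\<dots> \<le> x ^ 2 * (\<beta> ^ 2 / N + 2 / N) + x * (2 / N) + (2 + 2 * \<alpha> + \<alpha> ^ 2) / N"
    using t1 t2 t3 t4 x0 x2 by (intro add_mono mult_left_mono) auto
  also have "\<dots> = ((\<beta> ^ 2 + 2) * x ^ 2 + 2 * x + (2 + 2 * \<alpha> + \<alpha> ^ 2)) / N"
    using N1 by (simp add: field_simps)
  also have "\<dots> \<le> (6 + 2 * \<alpha> + \<alpha> ^ 2 + \<beta> ^ 2) * (1 + x ^ 2) / N"
  proof (intro divide_right_mono)
    have "2 * x \<le> 1 + x ^ 2" using sum_squares_ge_zero[of "x - 1" 0] by (simp add: power2_eq_square algebra_simps)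
    then show "(\<beta> ^ 2 + 2) * x ^ 2 + 2 * x + (2 + 2 * \<alpha> + \<alpha> ^ 2) \<le> (6 + 2 * \<alpha> + \<alpha> ^ 2 + \<beta> ^ 2) * (1 + x ^ 2)"
    proof -
      have e1: "(6 + 2 * \<alpha> + \<alpha> ^ 2 + \<beta> ^ 2) * (1 + x ^ 2) = 6 + 2 * \<alpha> + \<alpha> ^ 2 + \<beta> ^ 2 + 6 * x ^ 2 + 2 * (\<alpha> * x ^ 2) + \<alpha> ^ 2 * x ^ 2 + \<beta> ^ 2 * x ^ 2"
        by (simp add: algebra_simps)
      have e2: "(\<beta> ^ 2 + 2) * x ^ 2 + 2 * x + (2 + 2 * \<alpha> + \<alpha> ^ 2) = \<beta> ^ 2 * x ^ 2 + 2 * x ^ 2 + 2 * x + 2 + 2 * \<alpha> + \<alpha> ^ 2"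
        by (simp add: algebra_simps)
      have "0 \<le> \<alpha> * x ^ 2" "0 \<le> \<alpha> ^ 2 * x ^ 2" using a0 by auto
      then show ?thesis unfolding e1 e2 using zero_le_power2[of \<beta>] \<open>2 * x \<le> 1 + x ^ 2\<close> x2 by linarith
    qed
  qed (use N1 in simp)
  finally show ?thesis unfolding N_def .
qed

end


context fixes q :: real and n :: nat and x \<alpha> \<beta> M :: real and f :: "real \<Rightarrow> real"
  assumes q0: "0 < q" and q1: "q < 1" and n1: "1 \<le> n" and x0: "0 \<le> x"
    and a0: "0 \<le> \<alpha>" and b0: "0 \<le> \<beta>" and fb: "\<And>y. 0 \<le> y \<Longrightarrow> \<bar>f y\<bar> \<le> M"
begin

lemma inner_f_sums: "(\<lambda>j. wBS q n k j * f (YBS \<alpha> \<beta> q n k j)) sums (\<Sum>j. wBS q n k j * f (YBS \<alpha> \<beta> q n k j))"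
proof -
  have "summable (\<lambda>j. M * wBS q n k j)"
    using sums_mult[OF wBS_sum0[OF q0 q1 n1, of k], of M] by (simp add: sums_iff)
  then have "summable (\<lambda>j. wBS q n k j * f (YBS \<alpha> \<beta> q n k j))"
  proof (rule summable_comparison_test[rotated])
    show "\<exists>N. \<forall>j\<ge>N. norm (wBS q n k j * f (YBS \<alpha> \<beta> q n k j)) \<le> M * wBS q n k j"
    proof (intro exI allI impI)
      fix j
      have w: "0 \<le> wBS q n k j" by (rule wBS_nonneg[OF q0 q1 n1])
      have "\<bar>f (YBS \<alpha> \<beta> q n k j)\<bar> \<le> M" using fb Y_nonneg[OF q0 q1 n1 x0 a0 b0] by blast
      then have "wBS q n k j * \<bar>f (YBS \<alpha> \<beta> q n k j)\<bar> \<le> wBS q n k j * M" using w by (rule mult_left_mono)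
      then show "norm (wBS q n k j * f (YBS \<alpha> \<beta> q n k j)) \<le> M * wBS q n k j"
        using w by (simp add: abs_mult mult.commute)
    qed
  qed
  then show ?thesis by (rule summable_sums)
qed

lemma G_bound: "\<bar>\<Sum>j. wBS q n k j * f (YBS \<alpha> \<beta> q n k j)\<bar> \<le> M"
proof -
  have "\<bar>\<Sum>j. wBS q n k j * f (YBS \<alpha> \<beta> q n k j)\<bar> \<le> M * 1"
  proof (rule abs_sums_le[OF _ inner_f_sums sums_mult[OF wBS_sum0[OF q0 q1 n1]]])
    fix j
    have w: "0 \<le> wBS q n k j" by (rule wBS_nonneg[OF q0 q1 n1])
    have "\<bar>f (YBS \<alpha> \<beta> q n k j)\<bar> \<le> M" using fb Y_nonneg[OF q0 q1 n1 x0 a0 b0] by blast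
    then have "wBS q n k j * \<bar>f (YBS \<alpha> \<beta> q n k j)\<bar> \<le> wBS q n k j * M" using w by (rule mult_left_mono)
    then show "\<bar>wBS q n k j * f (YBS \<alpha> \<beta> q n k j)\<bar> \<le> M * wBS q n k j" using w by (simp add: abs_mult mult.commute)
  qed
  then show ?thesis by simp
qed

lemma outer_f_sums: "(\<lambda>k. pqBS q n k x * (\<Sum>j. wBS q n k j * f (YBS \<alpha> \<beta> q n k j))) sums
    (\<Sum>k. pqBS q n k x * (\<Sum>j. wBS q n k j * f (YBS \<alpha> \<beta> q n k j)))"
proof -
  have "summable (\<lambda>k. M * pqBS q n k x)"
    using sums_mult[OF p_sum[OF q0 q1 x0 n1], of M] by (simp add: sums_iff)
  then have "summable (\<lambda>k. pqBS q n k x * (\<Sum>j. wBS q n k j * f (YBS \<alpha> \<beta> q n k j)))"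
  proof (rule summable_comparison_test[rotated])
    show "\<exists>N. \<forall>k\<ge>N. norm (pqBS q n k x * (\<Sum>j. wBS q n k j * f (YBS \<alpha> \<beta> q n k j))) \<le> M * pqBS q n k x"
    proof (intro exI allI impI)
      fix k
      have p: "0 \<le> pqBS q n k x" by (rule p_nonneg[OF q0 q1 x0])
      have "pqBS q n k x * \<bar>\<Sum>j. wBS q n k j * f (YBS \<alpha> \<beta> q n k j)\<bar> \<le> pqBS q n k x * M"
        using G_bound[of k] p by (rule mult_left_mono)
      then show "norm (pqBS q n k x * (\<Sum>j. wBS q n k j * f (YBS \<alpha> \<beta> q n k j))) \<le> M * pqBS q n k x"
        using p by (simp add: abs_mult mult.commute)
    qed
  qed
  then show ?thesis by (rule summable_sums)
qed

lemma BSS_eq: "BSS_op \<alpha> \<beta> n q f x = (\<Sum>k. pqBS q n k x * (\<Sum>j. wBS q n k j * f (YBS \<alpha> \<beta> q n k j)))"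
proof -
  define T where "T k j = (1 / q ^ (k + 1)) * sqBS q n k (q / (1 - q ^ n) * q ^ j) * f (YBS \<alpha> \<beta> q n k j) * q ^ j" for k j
  define G where "G k = (\<Sum>j. wBS q n k j * f (YBS \<alpha> \<beta> q n k j))" for k
  define C where "C = qint q n * ((1 - q) * (q / (1 - q ^ n)))"
  have C: "C = q" unfolding C_def by (rule s3[OF q0 q1 n1])
  have N0: "qint q n \<noteq> 0" using qint_ge1[OF q0 q1 n1] by simp
  have unf: "BSS_op \<alpha> \<beta> n q f x = qint q n * (\<Sum>k. pqBS q n k x * ((1 - q) * (q / (1 - q ^ n)) * (\<Sum>j. T k j)))"
    unfolding BSS_op_def qjackson_def T_def YBS_def uBS_def ..
  have wT: "wBS q n k j * f (YBS \<alpha> \<beta> q n k j) = C * T k j" for k j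
    unfolding wBS_def T_def C_def by (simp add: mult_ac)
  have Tsum: "(\<lambda>j. T k j) sums (G k / C)" for k
  proof -
    have "(\<lambda>j. wBS q n k j * f (YBS \<alpha> \<beta> q n k j) / C) sums (G k / C)"
      unfolding G_def by (intro sums_divide inner_f_sums)
    then show ?thesis unfolding wT using C q0 by simp
  qed
  have inner: "(1 - q) * (q / (1 - q ^ n)) * (\<Sum>j. T k j) = G k / qint q n" for k
  proof -
    have "(\<Sum>j. T k j) = G k / C" using Tsum[of k] by (simp add: sums_iff)
    moreover have "(1 - q) * (q / (1 - q ^ n)) = C / qint q n" unfolding C_def using N0 by simp
    ultimately show ?thesis using C q0 by simp
  qed
  have "(\<lambda>k. pqBS q n k x * G k / qint q n) sums ((\<Sum>k. pqBS q n k x * G k) / qint q n)"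
    unfolding G_def by (intro sums_divide outer_f_sums)
  then have "(\<Sum>k. pqBS q n k x * ((1 - q) * (q / (1 - q ^ n)) * (\<Sum>j. T k j))) = (\<Sum>k. pqBS q n k x * G k) / qint q n"
    unfolding inner by (simp add: sums_iff)
  then show ?thesis unfolding unf G_def using N0 by simp
qed


lemma main_est:
  assumes L0: "0 \<le> L" and H: "\<And>y. 0 \<le> y \<Longrightarrow> \<bar>f y - f x\<bar> \<le> E + L * (y - x) ^ 2"
  shows "\<bar>BSS_op \<alpha> \<beta> n q f x - f x\<bar> \<le> E + L * Phi2 \<alpha> \<beta> q n x"
proof -
  define G where "G k = (\<Sum>j. wBS q n k j * f (YBS \<alpha> \<beta> q n k j))" for k
  define V where "V k = (\<Sum>j. wBS q n k j * (YBS \<alpha> \<beta> q n k j - x) ^ 2)" for k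
  have Vs: "(\<lambda>j. wBS q n k j * (YBS \<alpha> \<beta> q n k j - x) ^ 2) sums V k" for k
    using inner2[OF q0 q1 n1 x0 a0 b0, of k] unfolding V_def by (simp add: sums_iff)
  have Gb: "\<bar>G k - f x\<bar> \<le> E + L * V k" for k
  proof -
    have s1: "(\<lambda>j. wBS q n k j * f (YBS \<alpha> \<beta> q n k j) - wBS q n k j * f x) sums (G k - 1 * f x)"
      unfolding G_def by (intro sums_diff inner_f_sums sums_mult2 wBS_sum0[OF q0 q1 n1])
    have s2: "(\<lambda>j. E * wBS q n k j + L * (wBS q n k j * (YBS \<alpha> \<beta> q n k j - x) ^ 2)) sums (E * 1 + L * V k)"
      by (intro sums_add sums_mult wBS_sum0[OF q0 q1 n1] Vs)
    have "\<bar>G k - 1 * f x\<bar> \<le> E * 1 + L * V k"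
    proof (rule abs_sums_le[OF _ s1 s2])
      fix j
      have w: "0 \<le> wBS q n k j" by (rule wBS_nonneg[OF q0 q1 n1])
      have "\<bar>f (YBS \<alpha> \<beta> q n k j) - f x\<bar> \<le> E + L * (YBS \<alpha> \<beta> q n k j - x) ^ 2"
        by (rule H[OF Y_nonneg[OF q0 q1 n1 x0 a0 b0]])
      then have "wBS q n k j * \<bar>f (YBS \<alpha> \<beta> q n k j) - f x\<bar> \<le> wBS q n k j * (E + L * (YBS \<alpha> \<beta> q n k j - x) ^ 2)"
        using w by (rule mult_left_mono)
      then show "\<bar>wBS q n k j * f (YBS \<alpha> \<beta> q n k j) - wBS q n k j * f x\<bar> \<le> E * wBS q n k j + L * (wBS q n k j * (YBS \<alpha> \<beta> q n k j - x) ^ 2)"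
        unfolding abs_wdiff[OF w] by (simp add: algebra_simps)
    qed
    then show ?thesis by simp
  qed
  have o1: "(\<lambda>k. pqBS q n k x * G k - pqBS q n k x * f x) sums (BSS_op \<alpha> \<beta> n q f x - 1 * f x)"
    unfolding G_def BSS_eq by (intro sums_diff outer_f_sums sums_mult2 p_sum[OF q0 q1 x0 n1])
  have o2: "(\<lambda>k. E * pqBS q n k x + L * (pqBS q n k x * V k)) sums (E * 1 + L * Phi2 \<alpha> \<beta> q n x)"
    unfolding V_def by (intro sums_add sums_mult p_sum[OF q0 q1 x0 n1] outer2[OF q0 q1 n1 x0 a0 b0])
  have "\<bar>BSS_op \<alpha> \<beta> n q f x - 1 * f x\<bar> \<le> E * 1 + L * Phi2 \<alpha> \<beta> q n x"
  proof (rule abs_sums_le[OF _ o1 o2])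
    fix k
    have p: "0 \<le> pqBS q n k x" by (rule p_nonneg[OF q0 q1 x0])
    have "pqBS q n k x * \<bar>G k - f x\<bar> \<le> pqBS q n k x * (E + L * V k)" using Gb[of k] p by (rule mult_left_mono)
    then show "\<bar>pqBS q n k x * G k - pqBS q n k x * f x\<bar> \<le> E * pqBS q n k x + L * (pqBS q n k x * V k)"
      unfolding abs_wdiff[OF p] by (simp add: algebra_simps)
  qed
  then show ?thesis by simp
qed

end


lemma norm_small:
  fixes q \<alpha> \<beta> M L E R B :: real and n :: nat and f :: "real \<Rightarrow> real"
  assumes q0: "0 < q" and q1: "q < 1" and n1: "1 \<le> n" and a0: "0 \<le> \<alpha>" and b0: "0 \<le> \<beta>"
    and fb: "\<And>y. 0 \<le> y \<Longrightarrow> \<bar>f y\<bar> \<le> M"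
    and L0: "0 \<le> L" and E0: "0 \<le> E"
    and hloc: "\<And>x y. 0 \<le> x \<Longrightarrow> x \<le> R \<Longrightarrow> 0 \<le> y \<Longrightarrow> \<bar>f y - f x\<bar> \<le> E + L * (y - x) ^ 2"
    and qh: "1/2 \<le> q" and R0: "0 \<le> R"
    and tail: "2 * M / (1 + R ^ 2) \<le> B"
    and loc: "E + L * (6 + 2 * \<alpha> + \<alpha> ^ 2 + \<beta> ^ 2) / qint q n \<le> B"
  shows "0 \<le> rho0_norm (\<lambda>x. BSS_op \<alpha> \<beta> n q f x - f x) \<and> rho0_norm (\<lambda>x. BSS_op \<alpha> \<beta> n q f x - f x) \<le> B"
proof -
  have M0: "0 \<le> M" using fb[of 0] by simp
  define K0 where "K0 = 6 + 2 * \<alpha> + \<alpha> ^ 2 + \<beta> ^ 2"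
  define N where "N = qint q n"
  have N1: "1 \<le> N" unfolding N_def by (rule qint_ge1[OF q0 q1 n1])
  have PB: "\<bar>BSS_op \<alpha> \<beta> n q f x - f x\<bar> / (1 + x ^ 2) \<le> B" if "x \<in> {0..}" for x
  proof -
    from that have x0: "0 \<le> x" by simp
    have pos: "0 < 1 + x ^ 2" by (simp add: add_pos_nonneg)
    show "\<bar>BSS_op \<alpha> \<beta> n q f x - f x\<bar> / (1 + x ^ 2) \<le> B"
    proof (cases "x \<le> R")
      case True
      have H1: "\<And>y. 0 \<le> y \<Longrightarrow> \<bar>f y - f x\<bar> \<le> E + L * (y - x) ^ 2"
        using hloc[OF x0 True] by blast
      have "\<bar>BSS_op \<alpha> \<beta> n q f x - f x\<bar> \<le> E + L * Phi2 \<alpha> \<beta> q n x"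
        by (rule main_est[OF q0 q1 n1 x0 a0 b0 fb L0 H1])
      also have "\<dots> \<le> E + L * (K0 * (1 + x ^ 2) / N)"
        using Phi2_bound[OF q0 q1 n1 x0 a0 b0 qh] L0 unfolding K0_def N_def
        by (intro add_left_mono mult_left_mono) auto
      finally have A: "\<bar>BSS_op \<alpha> \<beta> n q f x - f x\<bar> \<le> E + L * (K0 * (1 + x ^ 2) / N)" .
      have "\<bar>BSS_op \<alpha> \<beta> n q f x - f x\<bar> / (1 + x ^ 2) \<le> (E + L * (K0 * (1 + x ^ 2) / N)) / (1 + x ^ 2)"
        using A pos by (intro divide_right_mono) auto
      also have "\<dots> = E / (1 + x ^ 2) + L * K0 / N" using pos N1 by (simp add: field_simps)
      also have "E / (1 + x ^ 2) \<le> E / 1" using E0 pos by (intro divide_left_mono) auto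
      finally show ?thesis using loc unfolding K0_def N_def by simp
    next
      case False
      have H: "\<bar>f y - f x\<bar> \<le> 2 * M + 0 * (y - x) ^ 2" if "0 \<le> y" for y
        using fb[OF that] fb[OF x0] by simp
      have "\<bar>BSS_op \<alpha> \<beta> n q f x - f x\<bar> \<le> 2 * M + 0 * Phi2 \<alpha> \<beta> q n x"
        by (rule main_est[OF q0 q1 n1 x0 a0 b0 fb _ H]) simp_all
      then have "\<bar>BSS_op \<alpha> \<beta> n q f x - f x\<bar> / (1 + x ^ 2) \<le> 2 * M / (1 + x ^ 2)"
        using pos by (intro divide_right_mono) auto
      also have "\<dots> \<le> 2 * M / (1 + R ^ 2)"
      proof (intro divide_left_mono)
        have "R ^ 2 \<le> x ^ 2" using False R0 by (intro power_mono) auto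
        then show "1 + R ^ 2 \<le> 1 + x ^ 2" by simp
      qed (use M0 pos in \<open>auto intro!: mult_pos_pos add_pos_nonneg\<close>)
      finally show ?thesis using tail by simp
    qed
  qed
  have bdd: "bdd_above ((\<lambda>x. \<bar>BSS_op \<alpha> \<beta> n q f x - f x\<bar> / (1 + x ^ 2)) ` {0..})"
    using PB by (intro bdd_aboveI2) blast
  have "0 \<le> (SUP x\<in>{0..}. \<bar>BSS_op \<alpha> \<beta> n q f x - f x\<bar> / (1 + x ^ 2))"
    by (rule cSUP_upper2[OF bdd, of 0]) auto
  moreover have "(SUP x\<in>{0..}. \<bar>BSS_op \<alpha> \<beta> n q f x - f x\<bar> / (1 + x ^ 2)) \<le> B"
    by (rule cSUP_least) (use PB in auto)
  ultimately show ?thesis unfolding rho0_norm_def by simp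
qed


theorem theorem3:
  fixes \<alpha> \<beta> a :: real and q :: "nat \<Rightarrow> real" and f :: "real \<Rightarrow> real"
  assumes "0 \<le> \<alpha>" and "\<alpha> \<le> \<beta>"
    and "\<And>n. 0 < q n \<and> q n < 1"
    and "st_lim q 1"
    and "st_lim (\<lambda>n. q n ^ n) a" and "a < 1"
    and "st_lim (\<lambda>n. 1 / qint (q n) n) 0"
    and "continuous_on {0..} f" and "bounded (f ` {0..})"
  shows "st_lim (\<lambda>n. rho0_norm (\<lambda>x. BSS_op \<alpha> \<beta> n (q n) f x - f x)) 0"
proof -
  have a0: "0 \<le> \<alpha>" and b0: "0 \<le> \<beta>" using assms(1,2) by auto
  obtain M0 where M0: "\<forall>y\<in>f ` {0..}. norm y \<le> M0" using assms(9) by (auto simp: bounded_iff)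
  define M where "M = max M0 1"
  have Mpos: "0 < M" unfolding M_def by simp
  have fb: "\<bar>f y\<bar> \<le> M" if "0 \<le> y" for y
    using M0 that unfolding M_def by force
  show ?thesis unfolding st_lim_def
  proof (intro allI impI)
    fix \<epsilon> :: real assume \<epsilon>: "0 < \<epsilon>"
    define R where "R = 4 * M / \<epsilon> + 1"
    have R1: "1 \<le> R" unfolding R_def using Mpos \<epsilon> by simp
    have tail: "2 * M / (1 + R ^ 2) \<le> \<epsilon> / 2"
    proof -
      have "R \<le> R * R" using R1 by simp
      then have "R \<le> 1 + R ^ 2" by (simp add: power2_eq_square)
      then have "2 * M / (1 + R ^ 2) \<le> 2 * M / R" using R1 Mpos by (intro divide_left_mono) auto
      also have "2 * M / R \<le> \<epsilon> / 2"
      proof -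
        have "R * \<epsilon> = 4 * M + \<epsilon>" unfolding R_def using \<epsilon> by (simp add: field_simps)
        then have "4 * M \<le> \<epsilon> * R" using \<epsilon> by (simp add: mult.commute)
        then show ?thesis using R1 by (simp add: divide_simps)
      qed
      finally show ?thesis .
    qed
    have "uniformly_continuous_on {0..R + 1} f"
      by (rule compact_uniformly_continuous) (auto intro: continuous_on_subset[OF assms(8)])
    then obtain d where d0: "0 < d"
      and dU: "\<And>x x'. x \<in> {0..R + 1} \<Longrightarrow> x' \<in> {0..R + 1} \<Longrightarrow> dist x' x < d \<Longrightarrow> dist (f x') (f x) < \<epsilon> / 4"
      unfolding uniformly_continuous_on_def using \<epsilon> by (metis zero_less_divide_iff zero_less_numeral)
    define \<delta> where "\<delta> = min d 1"
    have \<delta>0: "0 < \<delta>" unfolding \<delta>_def using d0 by simp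
    define L where "L = 2 * M / \<delta> ^ 2"
    have L0: "0 \<le> L" unfolding L_def using Mpos by simp
    have hloc: "\<bar>f y - f x\<bar> \<le> \<epsilon> / 4 + L * (y - x) ^ 2" if x0: "0 \<le> x" and xR: "x \<le> R" and y0: "0 \<le> y" for x y
    proof (cases "\<bar>y - x\<bar> < \<delta>")
      case True
      then have "y \<le> R + 1" using xR unfolding \<delta>_def by auto
      then have "dist (f y) (f x) < \<epsilon> / 4"
        using True x0 xR y0 unfolding \<delta>_def by (intro dU) (auto simp: dist_real_def)
      moreover have "0 \<le> L * (y - x) ^ 2" using L0 by simp
      ultimately show ?thesis by (simp add: dist_real_def)
    next
      case False
      then have "\<delta> ^ 2 \<le> \<bar>y - x\<bar> ^ 2" using \<delta>0 by (intro power_mono) auto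
      then have "L * \<delta> ^ 2 \<le> L * (y - x) ^ 2" using L0 by (simp add: mult_left_mono)
      moreover have "L * \<delta> ^ 2 = 2 * M" unfolding L_def using \<delta>0 by simp
      moreover have "\<bar>f y - f x\<bar> \<le> 2 * M" using fb[OF x0] fb[OF y0] by simp
      ultimately show ?thesis using \<epsilon> by simp
    qed
    define K0 where "K0 = 6 + 2 * \<alpha> + \<alpha> ^ 2 + \<beta> ^ 2"
    have K0: "0 \<le> K0" unfolding K0_def using a0 by simp
    define \<eta> where "\<eta> = min (1/2) (\<epsilon> / (4 * (L * K0 + 1)))"
    have LK: "0 \<le> L * K0" using L0 K0 by simp
    have \<eta>0: "0 < \<eta>" unfolding \<eta>_def using \<epsilon> LK by (simp add: add_nonneg_pos)
    have good: "rho0_norm (\<lambda>x. BSS_op \<alpha> \<beta> n (q n) f x - f x) < \<epsilon> \<and>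
         0 \<le> rho0_norm (\<lambda>x. BSS_op \<alpha> \<beta> n (q n) f x - f x)"
      if n1: "1 \<le> n" and small: "\<bar>1 / qint (q n) n - 0\<bar> < \<eta>" for n
    proof -
      have q0: "0 < q n" and q1: "q n < 1" using assms(3)[of n] by auto
      define N where "N = qint (q n) n"
      have N1: "1 \<le> N" unfolding N_def by (rule qint_ge1[OF q0 q1 n1])
      have iN: "1 / N < \<eta>" using small N1 unfolding N_def by simp
      have qh: "1/2 \<le> q n"
      proof -
        have qn: "0 < 1 - q n ^ n" "1 - q n ^ n \<le> 1" using qn_lt1[OF q0 q1 n1] q0 by auto
        have "1 / N = (1 - q n) / (1 - q n ^ n)" unfolding N_def qint_def by simp
        also have "\<dots> \<ge> (1 - q n) / 1" using qn q1 by (intro divide_left_mono) auto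
        finally have "1 - q n \<le> 1 / N" by simp
        then show ?thesis using iN unfolding \<eta>_def by linarith
      qed
      have loc: "\<epsilon> / 4 + L * K0 / N \<le> \<epsilon> / 2"
      proof -
        have "L * K0 / N = L * K0 * (1 / N)" by simp
        also have "\<dots> \<le> L * K0 * (\<epsilon> / (4 * (L * K0 + 1)))"
          using iN LK unfolding \<eta>_def by (intro mult_left_mono) auto
        also have "\<dots> \<le> \<epsilon> / 4"
        proof -
          have "L * K0 * (\<epsilon> / (4 * (L * K0 + 1))) = (\<epsilon> / 4) * (L * K0 / (L * K0 + 1))" by simp
          also have "\<dots> \<le> (\<epsilon> / 4) * 1" using LK \<epsilon> by (intro mult_left_mono) auto
          finally show ?thesis by simp
        qed
        finally have "L * K0 / N \<le> \<epsilon> / 4" .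
        then show ?thesis by linarith
      qed
      have "0 \<le> rho0_norm (\<lambda>x. BSS_op \<alpha> \<beta> n (q n) f x - f x) \<and> rho0_norm (\<lambda>x. BSS_op \<alpha> \<beta> n (q n) f x - f x) \<le> \<epsilon> / 2"
        using loc unfolding K0_def N_def
        by (intro norm_small[OF q0 q1 n1 a0 b0 fb L0 _ hloc qh _ tail]) (use \<epsilon> R1 in auto)
      then show ?thesis using \<epsilon> by auto
    qed
    let ?A = "\<lambda>n. {j \<in> {1..n}. \<epsilon> \<le> \<bar>rho0_norm (\<lambda>x. BSS_op \<alpha> \<beta> j (q j) f x - f x) - 0\<bar>}"
    let ?B = "\<lambda>n. {j \<in> {1..n}. \<eta> \<le> \<bar>1 / qint (q j) j - 0\<bar>}"
    have sub: "?A n \<subseteq> ?B n" for n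
    proof
      fix j assume "j \<in> ?A n"
      then have j: "1 \<le> j" "j \<le> n" "\<epsilon> \<le> \<bar>rho0_norm (\<lambda>x. BSS_op \<alpha> \<beta> j (q j) f x - f x) - 0\<bar>" by auto
      show "j \<in> ?B n"
      proof (rule ccontr)
        assume "j \<notin> ?B n"
        then have "\<bar>1 / qint (q j) j - 0\<bar> < \<eta>" using j by auto
        then show False using good[OF j(1)] j(3) by auto
      qed
    qed
    have Bl: "(\<lambda>n. real (card (?B n)) / real n) \<longlonglongrightarrow> 0"
      using assms(7) \<eta>0 unfolding st_lim_def by blast
    show "(\<lambda>n. real (card (?A n)) / real n) \<longlonglongrightarrow> 0"
    proof (rule Lim_null_comparison[OF _ Bl])
      show "\<forall>\<^sub>F n in sequentially. norm (real (card (?A n)) / real n) \<le> real (card (?B n)) / real n"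
      proof (intro always_eventually allI)
        fix n
        have "card (?A n) \<le> card (?B n)" by (intro card_mono sub) auto
        then show "norm (real (card (?A n)) / real n) \<le> real (card (?B n)) / real n"
          by (simp add: divide_right_mono)
      qed
    qed
  qed
qed

end
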